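(* Let $n\ge 1$ be an integer and let $\mathbf F_{\mathcal V_n}(1)$ be the free algebra on one generator in the variety $\mathcal V_n$ generated by $\mathbf J_n$. Then $$|F_{\mathcal V_n}(1)|=\tfrac12\big(n^6+10n^5+42n^4+102n^3+157n^2+148n+72\big).$$
   Context: For $n\ge1$, $\mathbf J_n=\langle J_n;\otimes,\oplus,\wedge,\vee,\neg,\top,\mathbf f_0,\dots,\mathbf f_n,\mathbf t_0,\dots,\mathbf t_n,\bot\rangle$ where $J_n=\{\top,\mathbf f_0,\dots,\mathbf f_n,\mathbf t_0,\dots,\mathbf t_n,\bot\}$ ($2n+4$ elements). The knowledge order $\le_k$ on $J_n$ consists of the two chains $\bot<\mathbf f_n<\mathbf f_{n-1}<\dots<\mathbf f_0<\top$ and $\bot<\mathbf t_n<\dots<\mathbf t_0<\top$ (with $\mathbf f_i,\mathbf t_j$ incomparable). The truth order $\le_t$ is generated by $\mathbf f_0<\mathbf f_1<\dots<\mathbf f_n<\top<\mathbf t_n<\dots<\mathbf t_1<\mathbf t_0$ and $\mathbf f_n<\bot<\mathbf t_n$ ($\top,\bot$ incomparable). $\otimes,\oplus$ are meet and join for $\le_k$, $\wedge,\vee$ are meet and join for $\le_t$, $\neg\top=\top$, $\neg\bot=\bot$, $\neg\mathbf f_m=\mathbf t_m$, $\neg\mathbf t_m=\mathbf f_m$, and every element is a nullary operation (constant) naming itself. $\mathcal V_n$ is the variety generated by $\mathbf J_n$. *)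

theory Defs
  imports "HOL-Library.FuncSet"
begin

datatype jel = Top | Bot | Fe nat | Te nat

definition J :: "nat \<Rightarrow> jel set" where
  "J n = {Top, Bot} \<union> Fe ` {0..n} \<union> Te ` {0..n}"

text \<open>Knowledge order: two chains Bot < f_n < ... < f_0 < Top and Bot < t_n < ... < t_0 < Top.\<close>
fun le_k :: "jel \<Rightarrow> jel \<Rightarrow> bool" where
  "le_k Bot _ = True"
| "le_k _ Top = True"
| "le_k (Fe i) (Fe j) = (j \<le> i)"
| "le_k (Te i) (Te j) = (j \<le> i)"
| "le_k _ _ = False"

text \<open>Truth order: generated by f_0 < ... < f_n < Top < t_n < ... < t_0 and f_n < Bot < t_n.\<close>
fun le_t :: "jel \<Rightarrow> jel \<Rightarrow> bool" where
  "le_t (Fe i) (Fe j) = (i \<le> j)"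
| "le_t (Fe i) _ = True"
| "le_t Top Top = True"
| "le_t Top (Te j) = True"
| "le_t Top _ = False"
| "le_t Bot Bot = True"
| "le_t Bot (Te j) = True"
| "le_t Bot _ = False"
| "le_t (Te i) (Te j) = (j \<le> i)"
| "le_t (Te i) _ = False"

definition meet_in :: "'a set \<Rightarrow> ('a \<Rightarrow> 'a \<Rightarrow> bool) \<Rightarrow> 'a \<Rightarrow> 'a \<Rightarrow> 'a" where
  "meet_in A le x y = (THE z. z \<in> A \<and> le z x \<and> le z y \<and> (\<forall>w\<in>A. le w x \<and> le w y \<longrightarrow> le w z))"

definition join_in :: "'a set \<Rightarrow> ('a \<Rightarrow> 'a \<Rightarrow> bool) \<Rightarrow> 'a \<Rightarrow> 'a \<Rightarrow> 'a" where
  "join_in A le x y = (THE z. z \<in> A \<and> le x z \<and> le y z \<and> (\<forall>w\<in>A. le x w \<and> le y w \<longrightarrow> le z w))"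

definition kmeet :: "nat \<Rightarrow> jel \<Rightarrow> jel \<Rightarrow> jel" where "kmeet n = meet_in (J n) le_k"
definition kjoin :: "nat \<Rightarrow> jel \<Rightarrow> jel \<Rightarrow> jel" where "kjoin n = join_in (J n) le_k"
definition tmeet :: "nat \<Rightarrow> jel \<Rightarrow> jel \<Rightarrow> jel" where "tmeet n = meet_in (J n) le_t"
definition tjoin :: "nat \<Rightarrow> jel \<Rightarrow> jel \<Rightarrow> jel" where "tjoin n = join_in (J n) le_t"

fun jneg :: "jel \<Rightarrow> jel" where
  "jneg Top = Top"
| "jneg Bot = Bot"
| "jneg (Fe m) = Te m"
| "jneg (Te m) = Fe m"

inductive_set term1 :: "nat \<Rightarrow> (jel \<Rightarrow> jel) set" for n where
  var: "(\<lambda>x. x) \<in> term1 n"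
| const: "c \<in> J n \<Longrightarrow> (\<lambda>x. c) \<in> term1 n"
| kmeet: "f \<in> term1 n \<Longrightarrow> g \<in> term1 n \<Longrightarrow> (\<lambda>x. kmeet n (f x) (g x)) \<in> term1 n"
| kjoin: "f \<in> term1 n \<Longrightarrow> g \<in> term1 n \<Longrightarrow> (\<lambda>x. kjoin n (f x) (g x)) \<in> term1 n"
| tmeet: "f \<in> term1 n \<Longrightarrow> g \<in> term1 n \<Longrightarrow> (\<lambda>x. tmeet n (f x) (g x)) \<in> term1 n"
| tjoin: "f \<in> term1 n \<Longrightarrow> g \<in> term1 n \<Longrightarrow> (\<lambda>x. tjoin n (f x) (g x)) \<in> term1 n"
| neg: "f \<in> term1 n \<Longrightarrow> (\<lambda>x. jneg (f x)) \<in> term1 n"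

text \<open>Universe of the free algebra F_{V_n}(1), realised (as usual) as the algebra of
  unary term functions of J_n, i.e. term functions restricted to the carrier J n.\<close>
definition free1 :: "nat \<Rightarrow> (jel \<Rightarrow> jel) set" where
  "free1 n = (\<lambda>f. restrict f (J n)) ` term1 n"

end

theory Submission
  imports Defs
begin


fun km :: "jel \<Rightarrow> jel \<Rightarrow> jel" where
  "km Top y = y"
| "km x Top = x"
| "km Bot y = Bot"
| "km x Bot = Bot"
| "km (Fe i) (Fe j) = Fe (max i j)"
| "km (Te i) (Te j) = Te (max i j)"
| "km _ _ = Bot"

fun kj :: "jel \<Rightarrow> jel \<Rightarrow> jel" where
  "kj Bot y = y"
| "kj x Bot = x"
| "kj Top y = Top"
| "kj x Top = Top"
| "kj (Fe i) (Fe j) = Fe (min i j)"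
| "kj (Te i) (Te j) = Te (min i j)"
| "kj _ _ = Top"

fun tm :: "nat \<Rightarrow> jel \<Rightarrow> jel \<Rightarrow> jel" where
  "tm n (Fe i) (Fe j) = Fe (min i j)"
| "tm n (Fe i) y = Fe i"
| "tm n x (Fe j) = Fe j"
| "tm n (Te i) (Te j) = Te (max i j)"
| "tm n (Te i) y = y"
| "tm n x (Te j) = x"
| "tm n Top Top = Top"
| "tm n Bot Bot = Bot"
| "tm n _ _ = Fe n"

fun tj :: "nat \<Rightarrow> jel \<Rightarrow> jel \<Rightarrow> jel" where
  "tj n (Te i) (Te j) = Te (min i j)"
| "tj n (Te i) y = Te i"
| "tj n x (Te j) = Te j"
| "tj n (Fe i) (Fe j) = Fe (max i j)"
| "tj n (Fe i) y = y"
| "tj n x (Fe j) = x"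
| "tj n Top Top = Top"
| "tj n Bot Bot = Bot"
| "tj n _ _ = Te n"

lemma J_cases: "x \<in> J n \<longleftrightarrow> x = Top \<or> x = Bot \<or> (\<exists>i\<le>n. x = Fe i) \<or> (\<exists>i\<le>n. x = Te i)"
  by (auto simp: J_def)

lemma J_simps[simp]: "Top \<in> J n" "Bot \<in> J n" "Fe i \<in> J n \<longleftrightarrow> i \<le> n" "Te i \<in> J n \<longleftrightarrow> i \<le> n"
  by (auto simp: J_def)

lemma meet_in_eq:
  assumes "z \<in> A" "le z x" "le z y" "\<forall>w\<in>A. le w x \<and> le w y \<longrightarrow> le w z"
    and "\<forall>u\<in>A. \<forall>v\<in>A. le u v \<and> le v u \<longrightarrow> u = v"
  shows "meet_in A le x y = z"
  unfolding meet_in_def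
  by (rule the_equality) (use assms in blast)+

lemma join_in_eq:
  assumes "z \<in> A" "le x z" "le y z" "\<forall>w\<in>A. le x w \<and> le y w \<longrightarrow> le z w"
    and "\<forall>u\<in>A. \<forall>v\<in>A. le u v \<and> le v u \<longrightarrow> u = v"
  shows "join_in A le x y = z"
  unfolding join_in_def
  by (rule the_equality) (use assms in blast)+

lemma antisym_k: "le_k u v \<Longrightarrow> le_k v u \<Longrightarrow> u = v"
  by (cases u; cases v) auto
lemma antisym_t: "le_t u v \<Longrightarrow> le_t v u \<Longrightarrow> u = v"
  by (cases u; cases v) auto

lemma km_J: "x \<in> J n \<Longrightarrow> y \<in> J n \<Longrightarrow> km x y \<in> J n"
  by (cases x; cases y) auto
lemma kj_J: "x \<in> J n \<Longrightarrow> y \<in> J n \<Longrightarrow> kj x y \<in> J n"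
  by (cases x; cases y) auto
lemma tm_J: "x \<in> J n \<Longrightarrow> y \<in> J n \<Longrightarrow> tm n x y \<in> J n"
  by (cases x; cases y) auto
lemma tj_J: "x \<in> J n \<Longrightarrow> y \<in> J n \<Longrightarrow> tj n x y \<in> J n"
  by (cases x; cases y) auto
lemma neg_J: "x \<in> J n \<Longrightarrow> jneg x \<in> J n"
  by (cases x) auto

lemma kmeet_eq: assumes "x \<in> J n" "y \<in> J n" shows "kmeet n x y = km x y"
  unfolding kmeet_def
proof (rule meet_in_eq)
  show "km x y \<in> J n" using assms by (rule km_J)
  show "le_k (km x y) x" by (cases x; cases y) auto
  show "le_k (km x y) y" by (cases x; cases y) auto
  show "\<forall>w\<in>J n. le_k w x \<and> le_k w y \<longrightarrow> le_k w (km x y)"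
    by (auto simp: J_cases; cases x; cases y; auto)
  show "\<forall>u\<in>J n. \<forall>v\<in>J n. le_k u v \<and> le_k v u \<longrightarrow> u = v" using antisym_k by blast
qed

lemma kjoin_eq: assumes "x \<in> J n" "y \<in> J n" shows "kjoin n x y = kj x y"
  unfolding kjoin_def
proof (rule join_in_eq)
  show "kj x y \<in> J n" using assms by (rule kj_J)
  show "le_k x (kj x y)" by (cases x; cases y) auto
  show "le_k y (kj x y)" by (cases x; cases y) auto
  show "\<forall>w\<in>J n. le_k x w \<and> le_k y w \<longrightarrow> le_k (kj x y) w"
    by (auto simp: J_cases; cases x; cases y; auto)
  show "\<forall>u\<in>J n. \<forall>v\<in>J n. le_k u v \<and> le_k v u \<longrightarrow> u = v" using antisym_k by blast
qed

lemma tmeet_eq: assumes "x \<in> J n" "y \<in> J n" shows "tmeet n x y = tm n x y"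
  unfolding tmeet_def
proof (rule meet_in_eq)
  show "tm n x y \<in> J n" using assms by (rule tm_J)
  show "le_t (tm n x y) x" using assms by (cases x; cases y) auto
  show "le_t (tm n x y) y" using assms by (cases x; cases y) auto
  show "\<forall>w\<in>J n. le_t w x \<and> le_t w y \<longrightarrow> le_t w (tm n x y)"
    using assms by (auto simp: J_cases; cases x; cases y; auto)
  show "\<forall>u\<in>J n. \<forall>v\<in>J n. le_t u v \<and> le_t v u \<longrightarrow> u = v" using antisym_t by blast
qed

lemma tjoin_eq: assumes "x \<in> J n" "y \<in> J n" shows "tjoin n x y = tj n x y"
  unfolding tjoin_def
proof (rule join_in_eq)
  show "tj n x y \<in> J n" using assms by (rule tj_J)
  show "le_t x (tj n x y)" using assms by (cases x; cases y) auto
  show "le_t y (tj n x y)" using assms by (cases x; cases y) auto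
  show "\<forall>w\<in>J n. le_t x w \<and> le_t y w \<longrightarrow> le_t (tj n x y) w"
    using assms by (auto simp: J_cases; cases x; cases y; auto)
  show "\<forall>u\<in>J n. \<forall>v\<in>J n. le_t u v \<and> le_t v u \<longrightarrow> u = v" using antisym_t by blast
qed


definition isF :: "jel \<Rightarrow> bool" where "isF x = (case x of Fe _ \<Rightarrow> True | _ \<Rightarrow> False)"
definition isT :: "jel \<Rightarrow> bool" where "isT x = (case x of Te _ \<Rightarrow> True | _ \<Rightarrow> False)"
lemma isF_simps[simp]: "isF (Fe i)" "\<not> isF (Te i)" "\<not> isF Top" "\<not> isF Bot" by (auto simp: isF_def)
lemma isT_simps[simp]: "\<not> isT (Fe i)" "isT (Te i)" "\<not> isT Top" "\<not> isT Bot" by (auto simp: isT_def)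

definition R1 :: "jel \<Rightarrow> jel \<Rightarrow> bool" where
  "R1 x y = (x = y \<or> x = Top \<or> y = Bot \<or> (isF x \<and> isF y) \<or> (isT x \<and> isT y))"

lemma R1_km: "R1 x1 y1 \<Longrightarrow> R1 x2 y2 \<Longrightarrow> R1 (km x1 x2) (km y1 y2)"
  unfolding R1_def by (cases x1; cases y1; cases x2; cases y2) auto
lemma R1_kj: "R1 x1 y1 \<Longrightarrow> R1 x2 y2 \<Longrightarrow> R1 (kj x1 x2) (kj y1 y2)"
  unfolding R1_def by (cases x1; cases y1; cases x2; cases y2) auto
lemma R1_tm: "R1 x1 y1 \<Longrightarrow> R1 x2 y2 \<Longrightarrow> R1 (tm n x1 x2) (tm n y1 y2)"
  unfolding R1_def by (cases x1; cases y1; cases x2; cases y2) auto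
lemma R1_tj: "R1 x1 y1 \<Longrightarrow> R1 x2 y2 \<Longrightarrow> R1 (tj n x1 x2) (tj n y1 y2)"
  unfolding R1_def by (cases x1; cases y1; cases x2; cases y2) auto
lemma R1_neg: "R1 x1 y1 \<Longrightarrow> R1 (jneg x1) (jneg y1)"
  unfolding R1_def by (cases x1; cases y1) auto

fun chainrel :: "nat \<Rightarrow> nat \<Rightarrow> jel \<Rightarrow> jel \<Rightarrow> bool" where
  "chainrel i j (Fe k) (Fe l) = (k = l \<or> (i \<le> k \<and> k < l \<and> l \<le> j))"
| "chainrel i j (Te k) (Te l) = (k = l \<or> (i \<le> k \<and> k < l \<and> l \<le> j))"
| "chainrel i j x y = (x = y)"

lemma CR_km: "chainrel i j x1 y1 \<Longrightarrow> chainrel i j x2 y2 \<Longrightarrow> chainrel i j (km x1 x2) (km y1 y2)"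
  by (cases x1; cases y1; cases x2; cases y2) auto
lemma CR_kj: "chainrel i j x1 y1 \<Longrightarrow> chainrel i j x2 y2 \<Longrightarrow> chainrel i j (kj x1 x2) (kj y1 y2)"
  by (cases x1; cases y1; cases x2; cases y2) auto
lemma CR_tm: "chainrel i j x1 y1 \<Longrightarrow> chainrel i j x2 y2 \<Longrightarrow> chainrel i j (tm n x1 x2) (tm n y1 y2)"
  by (cases x1; cases y1; cases x2; cases y2) auto
lemma CR_tj: "chainrel i j x1 y1 \<Longrightarrow> chainrel i j x2 y2 \<Longrightarrow> chainrel i j (tj n x1 x2) (tj n y1 y2)"
  by (cases x1; cases y1; cases x2; cases y2) auto
lemma CR_neg: "chainrel i j x1 y1 \<Longrightarrow> chainrel i j (jneg x1) (jneg y1)"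
  by (cases x1; cases y1) auto


definition rel :: "jel \<Rightarrow> jel \<Rightarrow> jel \<Rightarrow> jel \<Rightarrow> bool" where
  "rel a b x y = (if a = b then x = y else if a = Top then R1 x y else if b = Top then R1 y x
     else if a = Bot then R1 y x else if b = Bot then R1 x y
     else (case (a, b) of (Fe i, Fe j) \<Rightarrow> (if i < j then chainrel i j x y else chainrel j i y x)
        | (Te i, Te j) \<Rightarrow> (if i < j then chainrel i j x y else chainrel j i y x)
        | _ \<Rightarrow> True))"

lemma rel_op:
  assumes R: "\<And>x1 y1 x2 y2. R1 x1 y1 \<Longrightarrow> R1 x2 y2 \<Longrightarrow> R1 (f x1 x2) (f y1 y2)"
    and C: "\<And>i j x1 y1 x2 y2. chainrel i j x1 y1 \<Longrightarrow> chainrel i j x2 y2 \<Longrightarrow> chainrel i j (f x1 x2) (f y1 y2)"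
    and h: "rel a b x1 y1" "rel a b x2 y2"
  shows "rel a b (f x1 x2) (f y1 y2)"
  using h unfolding rel_def
  by (auto split: if_splits jel.splits intro: R C)

lemma rel_neg: "rel a b x y \<Longrightarrow> rel a b (jneg x) (jneg y)"
  unfolding rel_def
  by (auto split: if_splits jel.splits intro: R1_neg CR_neg)

lemma rel_id: "rel a b a b"
  unfolding rel_def R1_def by (cases a; cases b) auto

lemma rel_const: "rel a b c c"
  unfolding rel_def R1_def by (cases a; cases b; cases c) auto

lemma term1_props:
  assumes "t \<in> term1 n"
  shows "(\<forall>x\<in>J n. t x \<in> J n) \<and> (\<forall>a\<in>J n. \<forall>b\<in>J n. rel a b (t a) (t b))"
  using assms
proof induction
  case var
  then show ?case by (simp add: rel_id)
next
  case (const c)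
  then show ?case by (simp add: rel_const)
next
  case (kmeet f g)
  then show ?case by (auto simp: kmeet_eq km_J intro!: rel_op[OF R1_km CR_km])
next
  case (kjoin f g)
  then show ?case by (auto simp: kjoin_eq kj_J intro!: rel_op[OF R1_kj CR_kj])
next
  case (tmeet f g)
  then show ?case by (auto simp: tmeet_eq tm_J intro!: rel_op[OF R1_tm CR_tm])
next
  case (tjoin f g)
  then show ?case by (auto simp: tjoin_eq tj_J intro!: rel_op[OF R1_tj CR_tj])
next
  case (neg f)
  then show ?case by (simp add: neg_J rel_neg)
qed


definition maj :: "nat \<Rightarrow> jel \<Rightarrow> jel \<Rightarrow> jel \<Rightarrow> jel" where
  "maj n p q r = tj n (tj n (tm n p q) (tm n q r)) (tm n p r)"

lemma maj_props:
  assumes "p \<in> J n" "q \<in> J n"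
  shows "maj n p p q = p" "maj n p q p = p" "maj n q p p = p"
  using assms unfolding maj_def by (cases p; cases q; auto)+

lemma maj_term:
  assumes "f \<in> term1 n" "g \<in> term1 n" "h \<in> term1 n"
  shows "(\<lambda>x. tjoin n (tjoin n (tmeet n (f x) (g x)) (tmeet n (g x) (h x))) (tmeet n (f x) (h x))) \<in> term1 n"
  using assms by (intro term1.intros)

lemma maj_eval:
  assumes "f x \<in> J n" "g x \<in> J n" "h x \<in> J n"
  shows "tjoin n (tjoin n (tmeet n (f x) (g x)) (tmeet n (g x) (h x))) (tmeet n (f x) (h x)) = maj n (f x) (g x) (h x)"
  using assms by (simp add: maj_def tmeet_eq tjoin_eq tm_J tj_J)

lemma finite_J: "finite (J n)" by (simp add: J_def)

lemma small_set: assumes "finite S" "card S \<le> 2" shows "S = {} \<or> (\<exists>a b. S = {a, b})"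
proof -
  have "card S = 0 \<or> card S = 1 \<or> card S = 2" using assms(2) by auto
  then show ?thesis using assms(1)
    by (auto simp: card_1_singleton_iff card_2_iff)
qed

lemma BP:
  assumes f: "\<forall>x\<in>J n. f x \<in> J n"
    and H: "\<forall>a\<in>J n. \<forall>b\<in>J n. \<exists>t\<in>term1 n. t a = f a \<and> t b = f b"
  shows "S \<subseteq> J n \<Longrightarrow> \<exists>t\<in>term1 n. \<forall>x\<in>S. t x = f x"
proof (induction "card S" arbitrary: S rule: less_induct)
  case less
  have fin: "finite S" using less.prems finite_J finite_subset by blast
  show ?case
  proof (cases "card S \<le> 2")
    case True
    then have "S = {} \<or> (\<exists>a b. S = {a, b})" using small_set fin by blast
    then show ?thesis
    proof
      assume "S = {}" then show ?thesis using term1.var by blast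
    next
      assume "\<exists>a b. S = {a, b}"
      then obtain a b where "S = {a, b}" by blast
      then show ?thesis using H less.prems by auto
    qed
  next
    case False
    obtain x1 where x1: "x1 \<in> S" using False by fastforce
    have c1: "card (S - {x1}) \<ge> 2" using False x1 fin by auto
    have "S - {x1} \<noteq> {}" using c1 by (metis card.empty not_numeral_le_zero)
    then obtain x2 where x2: "x2 \<in> S - {x1}" by blast
    have c2: "card (S - {x1} - {x2}) \<ge> 1" using c1 x2 fin by auto
    have "S - {x1} - {x2} \<noteq> {}" using c2 by (metis card.empty not_one_le_zero)
    then obtain x3 where x3: "x3 \<in> S - {x1} - {x2}" by blast
    have lt: "card (S - {y}) < card S" if "y \<in> S" for y using that fin by (metis card_Diff1_less fin)
    obtain t1 where t1: "t1 \<in> term1 n" "\<forall>x\<in>S - {x1}. t1 x = f x"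
      using less.hyps[OF lt[OF x1]] less.prems by blast
    obtain t2 where t2: "t2 \<in> term1 n" "\<forall>x\<in>S - {x2}. t2 x = f x"
      using less.hyps[of "S - {x2}"] lt x2 less.prems by blast
    obtain t3 where t3: "t3 \<in> term1 n" "\<forall>x\<in>S - {x3}. t3 x = f x"
      using less.hyps[of "S - {x3}"] lt x3 less.prems by blast
    define tt where "tt = (\<lambda>x. tjoin n (tjoin n (tmeet n (t1 x) (t2 x)) (tmeet n (t2 x) (t3 x))) (tmeet n (t1 x) (t3 x)))"
    have tmem: "tt \<in> term1 n" unfolding tt_def using maj_term t1 t2 t3 by blast
    have teq: "\<forall>x\<in>S. tt x = f x"
    proof
      fix x assume xS: "x \<in> S"
      have xJ: "x \<in> J n" using xS less.prems by blast
      have J1: "t1 x \<in> J n" using term1_props[OF t1(1)] xJ by blast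
      have J2: "t2 x \<in> J n" using term1_props[OF t2(1)] xJ by blast
      have J3: "t3 x \<in> J n" using term1_props[OF t3(1)] xJ by blast
      have fJ: "f x \<in> J n" using f xJ by blast
      have "tt x = maj n (t1 x) (t2 x) (t3 x)" unfolding tt_def using maj_eval[of t1 x n t2 t3] J1 J2 J3 by simp
      also have "\<dots> = f x"
      proof (cases "x = x1")
        case True
        then have "t2 x = f x" "t3 x = f x" using t2 t3 xS x2 x3 by auto
        then show ?thesis using maj_props(3)[OF fJ J1] by simp
      next
        case n1: False
        then have e1: "t1 x = f x" using t1 xS by auto
        show ?thesis
        proof (cases "x = x2")
          case True
          then have "t3 x = f x" using t3 xS x3 by auto
          then show ?thesis using e1 maj_props(2)[OF fJ J2] by simp
        next
          case False
          then have "t2 x = f x" using t2 xS by auto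
          then show ?thesis using e1 maj_props(1)[OF fJ J3] by simp
        qed
      qed
      finally show "tt x = f x" .
    qed
    show ?thesis using teq tmem by blast
  qed
qed


lemma k_simps[simp]: "kj x Top = Top" "kj x Bot = x" "km x Top = x" "km x Bot = Bot"
  by (cases x; simp)+

lemmas ops_eq = kmeet_eq kjoin_eq tmeet_eq tjoin_eq
lemmas ops_J = km_J kj_J tm_J tj_J neg_J

lemma term_const: "c \<in> J n \<Longrightarrow> (\<lambda>x. c) \<in> term1 n" by (rule term1.const)

lemma exI_term: "t \<in> term1 n \<Longrightarrow> t a = x \<Longrightarrow> t b = y \<Longrightarrow> \<exists>t\<in>term1 n. t a = x \<and> t b = y"
  by blast

lemma const_ex: "c \<in> J n \<Longrightarrow> \<exists>t\<in>term1 n. t a = c \<and> t b = c"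
  by (rule exI_term[where t="\<lambda>z. c"]) (auto intro: term1.const)

lemma neg_term_ex: "\<exists>t\<in>term1 n. t a = x \<and> t b = y \<Longrightarrow> \<exists>t\<in>term1 n. t a = jneg x \<and> t b = jneg y"
  using term1.neg by fastforce

lemma jneg_jneg[simp]: "jneg (jneg x) = x" by (cases x) auto

lemma interp_Top:
  assumes b: "b \<in> J n" "b \<noteq> Top" and xy: "x \<in> J n" "y \<in> J n" "R1 x y"
  shows "\<exists>t\<in>term1 n. t Top = x \<and> t b = y"
proof -
  define d where "d = (\<lambda>z. kmeet n z (jneg z))"
  have dmem: "d \<in> term1 n" unfolding d_def by (intro term1.intros)
  have dT: "d Top = Top" unfolding d_def by (simp add: kmeet_eq)
  have db: "d b = Bot" unfolding d_def using b by (cases b) (auto simp: kmeet_eq)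
  have FF: "\<exists>t\<in>term1 n. t Top = Fe k \<and> t b = Fe l" if "k \<le> n" "l \<le> n" for k l
  proof (cases "k \<le> l")
    case True
    show ?thesis
      apply (rule exI_term[where t="\<lambda>z. kjoin n (kmeet n (Fe k) (d z)) (Fe l)"])
      using dmem that True by (auto intro!: term1.intros simp: dT db ops_eq)
  next
    case False
    show ?thesis
      apply (rule exI_term[where t="\<lambda>z. tmeet n (kjoin n (Fe l) (d z)) (Fe k)"])
      using dmem that False by (auto intro!: term1.intros simp: dT db ops_eq)
  qed
  consider "x = y" | "x = Top" | "y = Bot" | "isF x \<and> isF y" | "isT x \<and> isT y"
    using xy(3) unfolding R1_def by blast
  then show ?thesis
  proof cases
    case 1 then show ?thesis using const_ex[OF xy(2)] by simp
  next
    case 2 show ?thesis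
      apply (rule exI_term[where t="\<lambda>z. kjoin n y (d z)"])
      using dmem xy 2 by (auto intro!: term1.intros simp: dT db ops_eq)
  next
    case 3 show ?thesis
      apply (rule exI_term[where t="\<lambda>z. kmeet n x (d z)"])
      using dmem xy 3 by (auto intro!: term1.intros simp: dT db ops_eq)
  next
    case 4
    then obtain k l where "x = Fe k" "y = Fe l" by (cases x; cases y) auto
    then show ?thesis using FF xy by auto
  next
    case 5
    then obtain k l where kl: "x = Te k" "y = Te l" by (cases x; cases y) auto
    then have "\<exists>t\<in>term1 n. t Top = Fe k \<and> t b = Fe l" using FF xy by auto
    from neg_term_ex[OF this] show ?thesis using kl by simp
  qed
qed


lemma interp_Bot:
  assumes b: "b \<in> J n" "b \<noteq> Top" "b \<noteq> Bot" and xy: "x \<in> J n" "y \<in> J n" "R1 y x"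
  shows "\<exists>t\<in>term1 n. t Bot = x \<and> t b = y"
proof -
  define d where "d = (\<lambda>z. kjoin n z (jneg z))"
  have dmem: "d \<in> term1 n" unfolding d_def by (intro term1.intros)
  have dT: "d Bot = Bot" unfolding d_def by (simp add: kjoin_eq)
  have db: "d b = Top" unfolding d_def using b by (cases b) (auto simp: kjoin_eq)
  have FF: "\<exists>t\<in>term1 n. t Bot = Fe k \<and> t b = Fe l" if "k \<le> n" "l \<le> n" for k l
  proof (cases "l \<le> k")
    case True
    show ?thesis
      apply (rule exI_term[where t="\<lambda>z. kmeet n (kjoin n (Fe k) (d z)) (Fe l)"])
      using dmem that True by (auto intro!: term1.intros simp: dT db ops_eq)
  next
    case False
    show ?thesis
      apply (rule exI_term[where t="\<lambda>z. tmeet n (kjoin n (Fe k) (d z)) (Fe l)"])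
      using dmem that False by (auto intro!: term1.intros simp: dT db ops_eq)
  qed
  consider "x = y" | "y = Top" | "x = Bot" | "isF x \<and> isF y" | "isT x \<and> isT y"
    using xy(3) unfolding R1_def by blast
  then show ?thesis
  proof cases
    case 1 then show ?thesis using const_ex[OF xy(2)] by simp
  next
    case 2 show ?thesis
      apply (rule exI_term[where t="\<lambda>z. kjoin n x (d z)"])
      using dmem xy 2 by (auto intro!: term1.intros simp: dT db ops_eq)
  next
    case 3 show ?thesis
      apply (rule exI_term[where t="\<lambda>z. kmeet n y (d z)"])
      using dmem xy 3 by (auto intro!: term1.intros simp: dT db ops_eq)
  next
    case 4
    then obtain k l where "x = Fe k" "y = Fe l" by (cases x; cases y) auto
    then show ?thesis using FF xy by auto
  next
    case 5
    then obtain k l where kl: "x = Te k" "y = Te l" by (cases x; cases y) auto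
    then have "\<exists>t\<in>term1 n. t Bot = Fe k \<and> t b = Fe l" using FF xy by auto
    from neg_term_ex[OF this] show ?thesis using kl by simp
  qed
qed

lemma interp_FF:
  assumes ij: "i < j" "j \<le> n" and xy: "x \<in> J n" "y \<in> J n" "chainrel i j x y"
  shows "\<exists>t\<in>term1 n. t (Fe i) = x \<and> t (Fe j) = y"
proof -
  have FF: "\<exists>t\<in>term1 n. t (Fe i) = Fe k \<and> t (Fe j) = Fe l" if "i \<le> k" "k < l" "l \<le> j" for k l
    apply (rule exI_term[where t="\<lambda>z. tmeet n (tjoin n z (Fe k)) (Fe l)"])
    using that ij by (auto intro!: term1.intros simp: ops_eq)
  show ?thesis
  proof (cases "x = y")
    case True then show ?thesis using const_ex[OF xy(2)] by simp
  next
    case False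
    then consider k l where "i \<le> k" "k < l" "l \<le> j" "x = Fe k" "y = Fe l"
      | k l where "i \<le> k" "k < l" "l \<le> j" "x = Te k" "y = Te l"
      using xy(3) by (cases x; cases y) auto
    then show ?thesis
    proof cases
      case 1 then show ?thesis using FF by auto
    next
      case 2 then show ?thesis using neg_term_ex[OF FF[of k l]] by auto
    qed
  qed
qed

lemma interp_TT:
  assumes ij: "i < j" "j \<le> n" and xy: "x \<in> J n" "y \<in> J n" "chainrel i j x y"
  shows "\<exists>t\<in>term1 n. t (Te i) = x \<and> t (Te j) = y"
proof -
  have FF: "\<exists>t\<in>term1 n. t (Te i) = Fe k \<and> t (Te j) = Fe l" if "i \<le> k" "k < l" "l \<le> j" for k l
    apply (rule exI_term[where t="\<lambda>z. tmeet n (tjoin n (jneg z) (Fe k)) (Fe l)"])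
    using that ij by (auto intro!: term1.intros simp: ops_eq)
  show ?thesis
  proof (cases "x = y")
    case True then show ?thesis using const_ex[OF xy(2)] by simp
  next
    case False
    then consider k l where "i \<le> k" "k < l" "l \<le> j" "x = Fe k" "y = Fe l"
      | k l where "i \<le> k" "k < l" "l \<le> j" "x = Te k" "y = Te l"
      using xy(3) by (cases x; cases y) auto
    then show ?thesis
    proof cases
      case 1 then show ?thesis using FF by auto
    next
      case 2 then show ?thesis using neg_term_ex[OF FF[of k l]] by auto
    qed
  qed
qed

lemma tm_F0: "tm n (Fe 0) y = Fe 0" by (cases y) auto
lemma tm_T0: "y \<in> J n \<Longrightarrow> tm n (Te 0) y = y" by (cases y) auto
lemma tj_F0: "y \<in> J n \<Longrightarrow> tj n (Fe 0) y = y" by (cases y) auto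
lemma tj_F0': "y \<in> J n \<Longrightarrow> tj n y (Fe 0) = y" by (cases y) auto

lemma interp_FT:
  assumes ij: "i \<le> n" "j \<le> n" and xy: "x \<in> J n" "y \<in> J n"
  shows "\<exists>t\<in>term1 n. t (Fe i) = x \<and> t (Te j) = y"
proof -
  define e where "e = (\<lambda>z. kmeet n (kjoin n z (Fe 0)) (kjoin n z (Te 0)))"
  have emem: "e \<in> term1 n" unfolding e_def by (intro term1.intros) simp_all
  have eF: "e (Fe i) = Fe 0" unfolding e_def using ij by (simp add: ops_eq)
  have eT: "e (Te j) = Te 0" unfolding e_def using ij by (simp add: ops_eq)
  show ?thesis
    apply (rule exI_term[where t="\<lambda>z. tjoin n (tmeet n (e z) y) (tmeet n (jneg (e z)) x)"])
    using emem xy by (auto intro!: term1.intros simp: eF eT ops_eq tm_F0 tm_T0 tj_F0 tj_F0')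
qed

lemma swap_ex: "\<exists>t\<in>term1 n. t b = y \<and> t a = x \<Longrightarrow> \<exists>t\<in>term1 n. t a = x \<and> t b = y"
  by blast

lemma interp:
  assumes ab: "a \<in> J n" "b \<in> J n" and xy: "x \<in> J n" "y \<in> J n" "rel a b x y"
  shows "\<exists>t\<in>term1 n. t a = x \<and> t b = y"
proof -
  consider "a = b" | "a \<noteq> b" "a = Top" | "a \<noteq> b" "a \<noteq> Top" "b = Top"
    | "a \<noteq> b" "a \<noteq> Top" "b \<noteq> Top" "a = Bot" | "a \<noteq> b" "a \<noteq> Top" "b \<noteq> Top" "a \<noteq> Bot" "b = Bot"
    | "a \<noteq> b" "a \<noteq> Top" "b \<noteq> Top" "a \<noteq> Bot" "b \<noteq> Bot" by blast
  then show ?thesis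
  proof cases
    case 1 then have "x = y" using xy by (simp add: rel_def)
    then show ?thesis using const_ex[OF xy(2), of a b] by simp
  next
    case 2 then show ?thesis using xy ab interp_Top[of b n x y] by (simp add: rel_def)
  next
    case 3 then show ?thesis using xy ab interp_Top[of a n y x] swap_ex by (simp add: rel_def)
  next
    case 4 then show ?thesis using xy ab interp_Bot[of b n x y] by (simp add: rel_def)
  next
    case 5 then show ?thesis using xy ab interp_Bot[of a n y x] swap_ex by (simp add: rel_def)
  next
    case 6
    then consider i j where "a = Fe i" "b = Fe j" | i j where "a = Te i" "b = Te j"
      | i j where "a = Fe i" "b = Te j" | i j where "a = Te i" "b = Fe j"
      by (cases a; cases b) auto
    then show ?thesis
    proof cases
      case 1
      then show ?thesis using 6 xy ab interp_FF[of i j n x y] interp_FF[of j i n y x] swap_ex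
        by (auto simp: rel_def split: if_splits)
    next
      case 2
      then show ?thesis using 6 xy ab interp_TT[of i j n x y] interp_TT[of j i n y x] swap_ex
        by (auto simp: rel_def split: if_splits)
    next
      case 3
      then show ?thesis using xy ab interp_FT[of i n j x y] by auto
    next
      case 4
      then show ?thesis using xy ab interp_FT[of j n i y x] swap_ex by auto
    qed
  qed
qed


definition Cset :: "nat \<Rightarrow> (jel \<Rightarrow> jel) set" where
  "Cset n = {f. f \<in> extensional (J n) \<and> (\<forall>x\<in>J n. f x \<in> J n) \<and> (\<forall>a\<in>J n. \<forall>b\<in>J n. rel a b (f a) (f b))}"

lemma free1_eq: "free1 n = Cset n"
proof
  show "free1 n \<subseteq> Cset n"
  proof
    fix f assume "f \<in> free1 n"
    then obtain t where t: "t \<in> term1 n" "f = restrict t (J n)" unfolding free1_def by blast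
    show "f \<in> Cset n" using term1_props[OF t(1)] t(2) unfolding Cset_def by auto
  qed
next
  show "Cset n \<subseteq> free1 n"
  proof
    fix f assume f: "f \<in> Cset n"
    have fJ: "\<forall>x\<in>J n. f x \<in> J n" and fe: "f \<in> extensional (J n)"
      and fr: "\<forall>a\<in>J n. \<forall>b\<in>J n. rel a b (f a) (f b)" using f unfolding Cset_def by auto
    have H: "\<forall>a\<in>J n. \<forall>b\<in>J n. \<exists>t\<in>term1 n. t a = f a \<and> t b = f b"
      using interp fJ fr by blast
    obtain t where t: "t \<in> term1 n" "\<forall>x\<in>J n. t x = f x" using BP[OF fJ H, of "J n"] by blast
    have "restrict t (J n) = f"
      by (rule extensionalityI[OF restrict_extensional fe]) (simp add: t(2))
    then show "f \<in> free1 n" unfolding free1_def using t(1) by blast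
  qed
qed



lemma J_decomp: "J n = {Top, Bot} \<union> Fe ` {..n} \<union> Te ` {..n}"
  by (auto simp: J_def)

lemma sum_J: "sum g (J n) = g Top + g Bot + (\<Sum>i\<le>n. g (Fe i)) + (\<Sum>i\<le>n. g (Te i))"
proof -
  have "sum g (J n) = sum g ({Top, Bot} \<union> Fe ` {..n}) + sum g (Te ` {..n})"
    unfolding J_decomp by (rule sum.union_disjoint) auto
  also have "sum g ({Top, Bot} \<union> Fe ` {..n}) = sum g {Top, Bot} + sum g (Fe ` {..n})"
    by (rule sum.union_disjoint) auto
  also have "sum g (Fe ` {..n}) = (\<Sum>i\<le>n. g (Fe i))"
    by (subst sum.reindex) (auto simp: inj_on_def)
  also have "sum g (Te ` {..n}) = (\<Sum>i\<le>n. g (Te i))"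
    by (subst sum.reindex) (auto simp: inj_on_def)
  finally show ?thesis by simp
qed

definition E :: "nat \<Rightarrow> (nat \<times> nat) set" where "E n = {(e, s). e < s \<and> s \<le> n}"

lemma E_Suc: "E (Suc n) = E n \<union> (\<lambda>e. (e, Suc n)) ` {..n}"
  by (auto simp: E_def)

lemma finite_E: "finite (E n)"
  by (rule finite_subset[of _ "{..n} \<times> {..n}"]) (auto simp: E_def)

lemma card_E: "2 * card (E n) = n * (n + 1)"
proof (induction n)
  case 0
  have "E 0 = {}" by (auto simp: E_def)
  then show ?case by simp
next
  case (Suc n)
  have "card (E (Suc n)) = card (E n) + card ((\<lambda>e. (e, Suc n)) ` {..n})"
    unfolding E_Suc by (rule card_Un_disjoint) (simp add: finite_E, simp, auto simp: E_def)
  also have "card ((\<lambda>e. (e, Suc n)) ` {..n}) = Suc n"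
    by (subst card_image) (auto simp: inj_on_def)
  finally show ?case using Suc.IH by simp
qed

definition constf :: "nat \<Rightarrow> jel \<Rightarrow> nat \<Rightarrow> jel" where
  "constf n c = restrict (\<lambda>_. c) {..n}"
definition clF :: "nat \<Rightarrow> nat \<times> nat \<Rightarrow> nat \<Rightarrow> jel" where
  "clF n p = restrict (\<lambda>i. Fe (max (fst p) (min (snd p) i))) {..n}"
definition clT :: "nat \<Rightarrow> nat \<times> nat \<Rightarrow> nat \<Rightarrow> jel" where
  "clT n p = restrict (\<lambda>i. Te (max (fst p) (min (snd p) i))) {..n}"

definition CH :: "nat \<Rightarrow> (nat \<Rightarrow> jel) set" where
  "CH n = {u. u \<in> extensional {..n} \<and> (\<forall>i\<le>n. u i \<in> J n) \<and>
     (\<forall>i j. i < j \<and> j \<le> n \<longrightarrow> chainrel i j (u i) (u j))}"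

lemma chain_char:
  assumes u: "u \<in> CH n"
  shows "(\<exists>c\<in>J n. u = constf n c) \<or> (\<exists>p\<in>E n. u = clF n p \<or> u = clT n p)"
proof (cases "\<forall>i\<le>n. u i = u 0")
  case True
  define c where "c = u 0"
  have uc: "\<forall>i\<le>n. u i = c" using True unfolding c_def by blast
  have "u = constf n c"
    by (rule extensionalityI[of _ "{..n}"]) (use u uc in \<open>auto simp: CH_def constf_def\<close>)
  moreover have "c \<in> J n" using u c_def by (auto simp: CH_def)
  ultimately show ?thesis by blast
next
  case False
  then obtain p where p: "p \<le> n" "u p \<noteq> u 0" by blast
  then have p0: "0 < p" by (cases p) auto
  have ue: "u \<in> extensional {..n}" and uJ: "\<forall>i\<le>n. u i \<in> J n"
    and uc: "\<And>i j. i < j \<Longrightarrow> j \<le> n \<Longrightarrow> chainrel i j (u i) (u j)" using u by (auto simp: CH_def)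
  have c0p: "chainrel 0 p (u 0) (u p)" using uc p0 p by blast
  have gen: "\<exists>g. (\<forall>i\<le>n. u i = C (g i)) \<and> (\<forall>i j. i < j \<longrightarrow> j \<le> n \<longrightarrow> g i = g j \<or> (i \<le> g i \<and> g i < g j \<and> g j \<le> j))"
    if C: "C = Fe \<or> C = Te" and u0: "u 0 = C k0" for C k0
  proof -
    have "\<forall>i. \<exists>m. i \<le> n \<longrightarrow> u i = C m"
    proof
      fix i show "\<exists>m. i \<le> n \<longrightarrow> u i = C m"
      proof (cases "i \<le> n \<and> 0 < i")
        case True
        then have "chainrel 0 i (u 0) (u i)" using uc by blast
        then show ?thesis using u0 C by (cases "u i") auto
      next
        case False
        then show ?thesis using u0 by (cases i) auto
      qed
    qed
    then obtain g where g: "\<forall>i\<le>n. u i = C (g i)" by metis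
    have "g i = g j \<or> (i \<le> g i \<and> g i < g j \<and> g j \<le> j)" if "i < j" "j \<le> n" for i j
      using uc[OF that] g that C by auto
    then show ?thesis using g by blast
  qed
  have main: "\<exists>q\<in>E n. u = (\<lambda>q. restrict (\<lambda>i. C (max (fst q) (min (snd q) i))) {..n}) q"
    if C: "C = Fe \<or> C = Te" and u0: "u 0 = C k0" for C k0
  proof -
    obtain g where g: "\<forall>i\<le>n. u i = C (g i)"
      and gr: "\<And>i j. i < j \<Longrightarrow> j \<le> n \<Longrightarrow> g i = g j \<or> (i \<le> g i \<and> g i < g j \<and> g j \<le> j)"
      using gen[OF C u0] by blast
    have Cinj: "C x = C y \<longleftrightarrow> x = y" for x y using C by auto
    have gp: "g p \<noteq> g 0" using p g by auto
    have e_lt: "g 0 < g n"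
    proof -
      have "g 0 < g p" using gr[OF p0 p(1)] gp by auto
      moreover have "g p \<le> g n" using gr[of p n] p by (cases "p = n") auto
      ultimately show ?thesis by simp
    qed
    have sn: "g n \<le> n" using gr[of 0 n] e_lt by (cases "n = 0") auto
    obtain e s where es: "e = g 0" "s = g n" by blast
    have gi: "g i = max e (min s i)" if i_le: "i \<le> n" for i
    proof -
      consider "i = 0" | "i = n" | "0 < i" "i < n" using i_le by (cases "i = 0"; cases "i = n") auto
      then show ?thesis
      proof cases
        case 1 then show ?thesis using es by simp
      next
        case 2 then show ?thesis using sn e_lt es by simp
      next
        case 3
        have A: "g 0 = g i \<or> (g 0 < g i \<and> g i \<le> i)" using gr[of 0 i] 3 i_le by auto
        have B: "g i = g n \<or> (i \<le> g i \<and> g i < g n)" using gr[of i n] 3 by auto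
        show ?thesis using A B e_lt es by (auto simp: max_def min_def)
      qed
    qed
    have "u = restrict (\<lambda>i. C (max e (min s i))) {..n}"
      by (rule extensionalityI[OF ue]) (auto simp: g gi)
    moreover have "(e, s) \<in> E n" using e_lt sn es by (simp add: E_def)
    ultimately show ?thesis by force
  qed
  show ?thesis
  proof (cases "u 0")
    case (Fe k)
    then show ?thesis using main[of Fe k] by (auto simp: clF_def)
  next
    case (Te k)
    then show ?thesis using main[of Te k] by (auto simp: clT_def)
  next
    case Top
    then show ?thesis using c0p p by (cases "u p") auto
  next
    case Bot
    then show ?thesis using c0p p by (cases "u p") auto
  qed
qed


lemma constf_CH: "c \<in> J n \<Longrightarrow> constf n c \<in> CH n"
  unfolding CH_def constf_def by (cases c) auto

lemma clF_CH: "p \<in> E n \<Longrightarrow> clF n p \<in> CH n"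
  unfolding CH_def clF_def E_def by (cases p) (auto simp: max_def min_def)

lemma clT_CH: "p \<in> E n \<Longrightarrow> clT n p \<in> CH n"
  unfolding CH_def clT_def E_def by (cases p) (auto simp: max_def min_def)

lemma R1_Fe: "R1 x (Fe k) = R1 x (Fe 0)" "R1 (Fe k) y = R1 (Fe 0) y"
  unfolding R1_def by (cases x; auto; cases y; auto)+
lemma R1_Te: "R1 x (Te k) = R1 x (Te 0)" "R1 (Te k) y = R1 (Te 0) y"
  unfolding R1_def by (cases x; auto; cases y; auto)+

lemma R1_Fe': "R1 x (Fe 0) \<Longrightarrow> R1 x (Fe k)" "R1 (Fe 0) y \<Longrightarrow> R1 (Fe k) y"
  using R1_Fe by auto
lemma R1_Te': "R1 x (Te 0) \<Longrightarrow> R1 x (Te k)" "R1 (Te 0) y \<Longrightarrow> R1 (Te k) y"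
  using R1_Te by auto

definition U :: "nat \<Rightarrow> jel \<Rightarrow> jel \<Rightarrow> (nat \<Rightarrow> jel) set" where
  "U n a b = {u \<in> CH n. \<forall>i\<le>n. R1 a (u i) \<and> R1 (u i) b}"

definition VC :: "nat \<Rightarrow> jel \<Rightarrow> jel \<Rightarrow> jel set" where
  "VC n a b = {c \<in> J n. R1 a c \<and> R1 c b}"

lemma U_eq: "U n a b = constf n ` VC n a b \<union> (if R1 a (Fe 0) \<and> R1 (Fe 0) b then clF n ` E n else {})
   \<union> (if R1 a (Te 0) \<and> R1 (Te 0) b then clT n ` E n else {})"
  (is "_ = ?R")
proof
  show "U n a b \<subseteq> ?R"
  proof
    fix u assume u: "u \<in> U n a b"
    then have uCH: "u \<in> CH n" and uc: "\<forall>i\<le>n. R1 a (u i) \<and> R1 (u i) b" by (auto simp: U_def)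
    from chain_char[OF uCH] show "u \<in> ?R"
    proof
      assume "\<exists>c\<in>J n. u = constf n c"
      then obtain c where c: "c \<in> J n" "u = constf n c" by blast
      then have "u 0 = c" by (simp add: constf_def)
      then have "c \<in> VC n a b" using uc c by (auto simp: VC_def)
      then show ?thesis using c by blast
    next
      assume "\<exists>p\<in>E n. u = clF n p \<or> u = clT n p"
      then obtain p where p: "p \<in> E n" "u = clF n p \<or> u = clT n p" by blast
      show ?thesis
      proof (cases "u = clF n p")
        case True
        then have "\<exists>k. u 0 = Fe k" by (simp add: clF_def)
        then have "R1 a (Fe 0) \<and> R1 (Fe 0) b" using uc R1_Fe by (metis le0)
        then show ?thesis using True p by auto
      next
        case False
        then have uT: "u = clT n p" using p by blast
        then have "\<exists>k. u 0 = Te k" by (simp add: clT_def)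
        then have "R1 a (Te 0) \<and> R1 (Te 0) b" using uc R1_Te by (metis le0)
        then show ?thesis using uT p by auto
      qed
    qed
  qed
next
  show "?R \<subseteq> U n a b"
  proof
    fix u assume "u \<in> ?R"
    then consider c where "c \<in> VC n a b" "u = constf n c"
      | p where "p \<in> E n" "u = clF n p" "R1 a (Fe 0) \<and> R1 (Fe 0) b"
      | p where "p \<in> E n" "u = clT n p" "R1 a (Te 0) \<and> R1 (Te 0) b"
      by (auto split: if_splits)
    then show "u \<in> U n a b"
    proof cases
      case 1 then show ?thesis using constf_CH by (auto simp: U_def VC_def constf_def)
    next
      case 2 then show ?thesis using clF_CH by (auto simp: U_def clF_def intro: R1_Fe')
    next
      case 3 then show ?thesis using clT_CH by (auto simp: U_def clT_def intro: R1_Te')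
    qed
  qed
qed

lemma clF_0: "clF n p 0 = Fe (fst p)" by (simp add: clF_def)
lemma clT_0: "clT n p 0 = Te (fst p)" by (simp add: clT_def)
lemma clF_n: "p \<in> E n \<Longrightarrow> clF n p n = Fe (snd p)" by (auto simp: clF_def E_def)
lemma clT_n: "p \<in> E n \<Longrightarrow> clT n p n = Te (snd p)" by (auto simp: clT_def E_def)

lemma inj_clF: "inj_on (clF n) (E n)"
proof (rule inj_onI)
  fix p q assume pq: "p \<in> E n" "q \<in> E n" "clF n p = clF n q"
  have "Fe (fst p) = Fe (fst q)" using pq(3) clF_0 by metis
  moreover have "Fe (snd p) = Fe (snd q)" using pq clF_n by metis
  ultimately show "p = q" by (simp add: prod_eq_iff)
qed
lemma inj_clT: "inj_on (clT n) (E n)"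
proof (rule inj_onI)
  fix p q assume pq: "p \<in> E n" "q \<in> E n" "clT n p = clT n q"
  have "Te (fst p) = Te (fst q)" using pq(3) clT_0 by metis
  moreover have "Te (snd p) = Te (snd q)" using pq clT_n by metis
  ultimately show "p = q" by (simp add: prod_eq_iff)
qed
lemma inj_constf: "inj_on (constf n) A"
proof (rule inj_onI)
  fix p q assume "constf n p = constf n q"
  then have "constf n p 0 = constf n q 0" by simp
  then show "p = q" by (simp add: constf_def)
qed

lemma card_U: "card (U n a b) = card (VC n a b) + (if R1 a (Fe 0) \<and> R1 (Fe 0) b then card (E n) else 0)
   + (if R1 a (Te 0) \<and> R1 (Te 0) b then card (E n) else 0)"
proof -
  have finVC: "finite (VC n a b)" unfolding VC_def using finite_J by auto
  have d1: "constf n ` VC n a b \<inter> clF n ` E n = {}"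
  proof (rule ccontr)
    assume "constf n ` VC n a b \<inter> clF n ` E n \<noteq> {}"
    then obtain c p where "p \<in> E n" "constf n c = clF n p" by blast
    then have "constf n c 0 = clF n p 0" "constf n c n = clF n p n" by simp_all
    then show False using \<open>p \<in> E n\<close> by (auto simp: constf_def clF_0 clF_n E_def)
  qed
  have d2: "constf n ` VC n a b \<inter> clT n ` E n = {}"
  proof (rule ccontr)
    assume "constf n ` VC n a b \<inter> clT n ` E n \<noteq> {}"
    then obtain c p where "p \<in> E n" "constf n c = clT n p" by blast
    then have "constf n c 0 = clT n p 0" "constf n c n = clT n p n" by simp_all
    then show False using \<open>p \<in> E n\<close> by (auto simp: constf_def clT_0 clT_n E_def)
  qed
  have d3: "clF n ` E n \<inter> clT n ` E n = {}"
  proof (rule ccontr)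
    assume "clF n ` E n \<inter> clT n ` E n \<noteq> {}"
    then obtain p q where "clF n p = clT n q" by blast
    then have "clF n p 0 = clT n q 0" by simp
    then show False by (simp add: clF_0 clT_0)
  qed
  have cF: "card (clF n ` E n) = card (E n)" by (rule card_image[OF inj_clF])
  have cT: "card (clT n ` E n) = card (E n)" by (rule card_image[OF inj_clT])
  have cC: "card (constf n ` VC n a b) = card (VC n a b)" by (rule card_image[OF inj_constf])
  have fin: "finite (constf n ` VC n a b)" "finite (clF n ` E n)" "finite (clT n ` E n)"
    using finVC finite_E by auto
  show ?thesis unfolding U_eq
    using d1 d2 d3 cF cT cC fin
    by (auto simp: card_Un_disjoint Int_Un_distrib2)
qed



definition AB :: "nat \<Rightarrow> (jel \<times> jel) set" where
  "AB n = {(a, b). a \<in> J n \<and> b \<in> J n \<and> R1 a b}"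

definition X :: "nat \<Rightarrow> ((jel \<times> jel) \<times> ((nat \<Rightarrow> jel) \<times> (nat \<Rightarrow> jel))) set" where
  "X n = Sigma (AB n) (\<lambda>p. U n (fst p) (snd p) \<times> U n (fst p) (snd p))"

definition Psi :: "nat \<Rightarrow> (jel \<times> jel) \<times> ((nat \<Rightarrow> jel) \<times> (nat \<Rightarrow> jel)) \<Rightarrow> jel \<Rightarrow> jel" where
  "Psi n q = restrict (\<lambda>x. case x of Top \<Rightarrow> fst (fst q) | Bot \<Rightarrow> snd (fst q)
      | Fe i \<Rightarrow> fst (snd q) i | Te i \<Rightarrow> snd (snd q) i) (J n)"

lemma U_props: "u \<in> U n a b \<Longrightarrow> u \<in> extensional {..n} \<and> (\<forall>i\<le>n. u i \<in> J n \<and> R1 a (u i) \<and> R1 (u i) b)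
   \<and> (\<forall>i j. i < j \<and> j \<le> n \<longrightarrow> chainrel i j (u i) (u j))"
  by (auto simp: U_def CH_def)

lemma inj_Psi: "inj_on (Psi n) (X n)"
proof (rule inj_onI)
  fix q1 q2 assume q: "q1 \<in> X n" "q2 \<in> X n" "Psi n q1 = Psi n q2"
  obtain a1 b1 u1 v1 where q1: "q1 = ((a1, b1), (u1, v1))" by (metis prod.collapse)
  obtain a2 b2 u2 v2 where q2: "q2 = ((a2, b2), (u2, v2))" by (metis prod.collapse)
  have e: "Psi n q1 x = Psi n q2 x" for x using q(3) by simp
  have "a1 = a2" using e[of Top] by (simp add: Psi_def q1 q2)
  moreover have "b1 = b2" using e[of Bot] by (simp add: Psi_def q1 q2)
  moreover have "u1 = u2"
  proof (rule extensionalityI[of _ "{..n}"])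
    show "u1 \<in> extensional {..n}" "u2 \<in> extensional {..n}" using q q1 q2 U_props by (auto simp: X_def)
    show "u1 i = u2 i" if "i \<in> {..n}" for i
      using that e[of "Fe i"] by (simp add: Psi_def q1 q2)
  qed
  moreover have "v1 = v2"
  proof (rule extensionalityI[of _ "{..n}"])
    show "v1 \<in> extensional {..n}" "v2 \<in> extensional {..n}" using q q1 q2 U_props by (auto simp: X_def)
    show "v1 i = v2 i" if "i \<in> {..n}" for i
      using that e[of "Te i"] by (simp add: Psi_def q1 q2)
  qed
  ultimately show "q1 = q2" using q1 q2 by simp
qed


lemma J_E:
  assumes "x \<in> J n"
  obtains "x = Top" | "x = Bot" | i where "i \<le> n" "x = Fe i" | i where "i \<le> n" "x = Te i"
  using assms by (auto simp: J_cases)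

lemma Psi_X: "q \<in> X n \<Longrightarrow> Psi n q \<in> Cset n"
proof -
  assume qX: "q \<in> X n"
  obtain a b u v where q: "q = ((a, b), (u, v))" by (metis prod.collapse)
  have ab: "a \<in> J n" "b \<in> J n" "R1 a b" using qX q by (auto simp: X_def AB_def)
  have u: "\<forall>i\<le>n. u i \<in> J n \<and> R1 a (u i) \<and> R1 (u i) b" "\<forall>i j. i < j \<and> j \<le> n \<longrightarrow> chainrel i j (u i) (u j)"
    using qX q U_props by (auto simp: X_def)
  have v: "\<forall>i\<le>n. v i \<in> J n \<and> R1 a (v i) \<and> R1 (v i) b" "\<forall>i j. i < j \<and> j \<le> n \<longrightarrow> chainrel i j (v i) (v j)"
    using qX q U_props by (auto simp: X_def)
  define f where "f = Psi n q"
  have fT: "f Top = a" and fB: "f Bot = b" and fF: "\<And>i. i \<le> n \<Longrightarrow> f (Fe i) = u i"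
    and fTe: "\<And>i. i \<le> n \<Longrightarrow> f (Te i) = v i"
    by (simp_all add: f_def Psi_def q)
  have fJ: "\<forall>x\<in>J n. f x \<in> J n"
  proof
    fix x assume "x \<in> J n"
    then show "f x \<in> J n" by (cases rule: J_E) (use ab u v fT fB fF fTe in auto)
  qed
  have frel: "rel x y (f x) (f y)" if "x \<in> J n" "y \<in> J n" for x y
  proof -
    have R1s: "R1 x x" for x by (simp add: R1_def)
    from that(1) show ?thesis
    proof (cases rule: J_E)
      case 1
      from that(2) show ?thesis
        by (cases rule: J_E) (use 1 ab u v fT fB fF fTe in \<open>auto simp: rel_def R1_def\<close>)
    next
      case 2
      from that(2) show ?thesis
        by (cases rule: J_E) (use 2 ab u v fT fB fF fTe in \<open>auto simp: rel_def R1_def\<close>)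
    next
      case (3 i)
      from that(2) show ?thesis
      proof (cases rule: J_E)
        case (3 j)
        then show ?thesis using \<open>i \<le> n\<close> \<open>x = Fe i\<close> u fF
          by (cases "i < j"; cases "j < i") (auto simp: rel_def)
      qed (use 3 ab u v fT fB fF fTe in \<open>auto simp: rel_def R1_def\<close>)
    next
      case (4 i)
      from that(2) show ?thesis
      proof (cases rule: J_E)
        case (4 j)
        then show ?thesis using \<open>i \<le> n\<close> \<open>x = Te i\<close> v fTe
          by (cases "i < j"; cases "j < i") (auto simp: rel_def)
      qed (use 4 ab u v fT fB fF fTe in \<open>auto simp: rel_def R1_def\<close>)
    qed
  qed
  have "f \<in> extensional (J n)" by (simp add: f_def Psi_def)
  then show ?thesis using fJ frel unfolding Cset_def f_def by blast
qed


lemma Cset_sub: "f \<in> Cset n \<Longrightarrow> f \<in> Psi n ` X n"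
proof -
  assume f: "f \<in> Cset n"
  have fe: "f \<in> extensional (J n)" and fJ: "\<forall>x\<in>J n. f x \<in> J n"
    and fr: "\<And>x y. x \<in> J n \<Longrightarrow> y \<in> J n \<Longrightarrow> rel x y (f x) (f y)"
    using f by (auto simp: Cset_def)
  define u where "u = restrict (\<lambda>i. f (Fe i)) {..n}"
  define v where "v = restrict (\<lambda>i. f (Te i)) {..n}"
  define q where "q = ((f Top, f Bot), (u, v))"
  have R1TB: "R1 (f Top) (f Bot)" using fr[of Top Bot] by (simp add: rel_def)
  have uU: "u \<in> U n (f Top) (f Bot)"
  proof -
    have A: "u \<in> extensional {..n}" by (simp add: u_def)
    have B: "\<forall>i\<le>n. u i \<in> J n" using fJ by (simp add: u_def)
    have C: "\<forall>i j. i < j \<and> j \<le> n \<longrightarrow> chainrel i j (u i) (u j)"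
    proof (intro allI impI)
      fix i j assume "i < j \<and> j \<le> n"
      then show "chainrel i j (u i) (u j)" using fr[of "Fe i" "Fe j"] by (simp add: u_def rel_def)
    qed
    have D: "\<forall>i\<le>n. R1 (f Top) (u i) \<and> R1 (u i) (f Bot)"
      using fr by (auto simp: u_def rel_def)
    show ?thesis unfolding U_def CH_def using A B C D by blast
  qed
  have vU: "v \<in> U n (f Top) (f Bot)"
  proof -
    have A: "v \<in> extensional {..n}" by (simp add: v_def)
    have B: "\<forall>i\<le>n. v i \<in> J n" using fJ by (simp add: v_def)
    have C: "\<forall>i j. i < j \<and> j \<le> n \<longrightarrow> chainrel i j (v i) (v j)"
    proof (intro allI impI)
      fix i j assume "i < j \<and> j \<le> n"
      then show "chainrel i j (v i) (v j)" using fr[of "Te i" "Te j"] by (simp add: v_def rel_def)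
    qed
    have D: "\<forall>i\<le>n. R1 (f Top) (v i) \<and> R1 (v i) (f Bot)"
      using fr by (auto simp: v_def rel_def)
    show ?thesis unfolding U_def CH_def using A B C D by blast
  qed
  have qX: "q \<in> X n" using uU vU R1TB fJ by (simp add: q_def X_def AB_def)
  have "Psi n q = f"
  proof (rule extensionalityI[OF _ fe])
    show "Psi n q \<in> extensional (J n)" by (simp add: Psi_def)
    show "Psi n q x = f x" if "x \<in> J n" for x
      using that by (cases rule: J_E) (auto simp: Psi_def q_def u_def v_def)
  qed
  then show ?thesis using qX by blast
qed

lemma card_Cset: "card (Cset n) = card (X n)"
proof -
  have "Psi n ` X n = Cset n" using Psi_X Cset_sub by blast
  then show ?thesis using card_image[OF inj_Psi] by metis
qed


lemma finite_U: "finite (U n a b)"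
proof (rule finite_subset)
  show "U n a b \<subseteq> PiE {..n} (\<lambda>_. J n)" by (auto simp: U_def CH_def PiE_def Pi_def)
  show "finite (PiE {..n} (\<lambda>_. J n))" by (rule finite_PiE) (auto simp: finite_J)
qed

lemma card_X: "card (X n) = (\<Sum>a\<in>J n. \<Sum>b\<in>J n. if R1 a b then card (U n a b) * card (U n a b) else 0)"
proof -
  have AB: "AB n = Sigma (J n) (\<lambda>a. {b \<in> J n. R1 a b})" by (auto simp: AB_def)
  have "card (X n) = (\<Sum>p\<in>AB n. card (U n (fst p) (snd p) \<times> U n (fst p) (snd p)))"
    unfolding X_def by (rule card_SigmaI) (auto simp: AB finite_J finite_U)
  also have "\<dots> = (\<Sum>p\<in>AB n. card (U n (fst p) (snd p)) * card (U n (fst p) (snd p)))"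
    by (simp add: card_cartesian_product)
  also have "\<dots> = (\<Sum>a\<in>J n. \<Sum>b\<in>{b \<in> J n. R1 a b}. card (U n a b) * card (U n a b))"
    unfolding AB by (subst sum.Sigma) (auto simp: finite_J split_def)
  also have "\<dots> = (\<Sum>a\<in>J n. \<Sum>b\<in>J n. if R1 a b then card (U n a b) * card (U n a b) else 0)"
    by (rule sum.cong[OF refl], rule sum.inter_filter[OF finite_J])
  finally show ?thesis .
qed

lemma card_VC: "card (VC n a b) = (\<Sum>c\<in>J n. if R1 a c \<and> R1 c b then 1 else 0)"
  unfolding VC_def by (simp add: sum.inter_filter[OF finite_J, symmetric])

lemma total:
  "card (Cset n) = (2*(n+1)+2+2*card (E n))^2 + 2 + 4*(n+1)*((n+1)+1+card (E n))^2 + 2*(n+1)^2*((n+1)+card (E n))^2"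
  unfolding card_Cset card_X card_U card_VC sum_J
  by (simp add: R1_def power2_eq_square algebra_simps)


lemma arith_final:
  fixes n K :: nat
  assumes hK: "2 * K = n * (n + 1)"
  shows "2 * ((2*(n+1)+2+2*K)^2 + 2 + 4*(n+1)*((n+1)+1+K)^2 + 2*(n+1)^2*((n+1)+K)^2) =
    n ^ 6 + 10 * n ^ 5 + 42 * n ^ 4 + 102 * n ^ 3 + 157 * n ^ 2 + 148 * n + 72"
proof -
  have "2 * ((2*(n+1)+2+2*K)^2 + 2 + 4*(n+1)*((n+1)+1+K)^2 + 2*(n+1)^2*((n+1)+K)^2)
     = 2*(2*(n+1)+2+2*K)^2 + 4 + 2*(n+1)*(2*(n+1)+2+2*K)^2 + (n+1)^2*(2*(n+1)+2*K)^2"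
    by (simp add: power2_eq_square algebra_simps)
  also have "\<dots> = 2*(2*(n+1)+2+n*(n+1))^2 + 4 + 2*(n+1)*(2*(n+1)+2+n*(n+1))^2 + (n+1)^2*(2*(n+1)+n*(n+1))^2"
    by (simp only: hK)
  also have "\<dots> = n ^ 6 + 10 * n ^ 5 + 42 * n ^ 4 + 102 * n ^ 3 + 157 * n ^ 2 + 148 * n + 72"
    by (simp add: power2_eq_square power3_eq_cube algebra_simps eval_nat_numeral)
  finally show ?thesis .
qed

theorem theorem6p3:
  fixes n :: nat
  assumes "n \<ge> 1"
  shows "2 * card (free1 n) =
    n ^ 6 + 10 * n ^ 5 + 42 * n ^ 4 + 102 * n ^ 3 + 157 * n ^ 2 + 148 * n + 72"
proof -
  have "2 * card (E n) = n * (n + 1)" by (rule card_E)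
  from arith_final[OF this] show ?thesis
    unfolding free1_eq total .
qed

end
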